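(* Let $A$ be an abelian group of order $2n$ and let $G=Dic_{4n}(A)$ be the generalized dicyclic group induced by $A$. Then: \begin{enumerate} \item If $A$ is not isomorphic to $\mathbb{Z}_2^m\times\mathbb{Z}_4$ for any $m\in\mathbb{N}$, then $\mathcal{CD}(G)$ is a chain of length $0$; namely $\mathcal{CD}(G)=\{G\}$ if $\exp(A)=2$, and $\mathcal{CD}(G)=\{A\}$ if $\exp(A)\neq 2$. \item If $A\cong\mathbb{Z}_2^m\times\mathbb{Z}_4$ for some $m\in\mathbb{N}$, then $\mathcal{CD}(G)$ is a quasi-antichain of width $3$, namely the set of all subgroups $H$ with $Z(G)\le H\le G$. \end{enumerate}
   Context: Here $\mathbb{N}=\{0,1,2,\dots\}$. For an abelian group $A$ of order $2n$, the generalized dicyclic group induced by $A$ is $Dic_{4n}(A)=\langle A,x\mid x^4=1,\ x^2\in A\setminus\{1\},\ x^{-1}ax=a^{-1}\ \forall a\in A\rangle$ (a group of order $4n$ containing $A$ as a subgroup of index $2$). For a finite group $G$ and $H\le G$, $m_G(H)=|H|\,|C_G(H)|$, $m^*(G)=\max\{m_G(H)\mid H\le G\}$, and the Chermak-Delgado lattice is $\mathcal{CD}(G)=\{H\le G\mid m_G(H)=m^*(G)\}$. A chain of length $0$ is a one-element lattice. A lattice is a quasi-antichain of width $w$ if it consists of a least element, a greatest element, and $w$ further pairwise incomparable elements. *)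

theory Defs
  imports "HOL-Algebra.Algebra"
begin

definition centralizer :: "('a, 'b) monoid_scheme \<Rightarrow> 'a set \<Rightarrow> 'a set" where
  "centralizer G H = {g \<in> carrier G. \<forall>h\<in>H. g \<otimes>\<^bsub>G\<^esub> h = h \<otimes>\<^bsub>G\<^esub> g}"

definition group_center :: "('a, 'b) monoid_scheme \<Rightarrow> 'a set" where
  "group_center G = centralizer G (carrier G)"

definition cd_measure :: "('a, 'b) monoid_scheme \<Rightarrow> 'a set \<Rightarrow> nat" where
  "cd_measure G H = card H * card (centralizer G H)"

definition cd_max :: "('a, 'b) monoid_scheme \<Rightarrow> nat" where
  "cd_max G = Max {cd_measure G H | H. subgroup H G}"

definition CD_lattice :: "('a, 'b) monoid_scheme \<Rightarrow> 'a set set" where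
  "CD_lattice G = {H. subgroup H G \<and> cd_measure G H = cd_max G}"

definition gen_dicyclic :: "('a, 'b) monoid_scheme \<Rightarrow> 'a set \<Rightarrow> bool" where
  "gen_dicyclic G A \<longleftrightarrow> group G \<and> finite (carrier G) \<and> subgroup A G \<and>
     (\<forall>a\<in>A. \<forall>b\<in>A. a \<otimes>\<^bsub>G\<^esub> b = b \<otimes>\<^bsub>G\<^esub> a) \<and>
     (\<exists>x\<in>carrier G. x \<notin> A \<and> carrier G = A \<union> {x \<otimes>\<^bsub>G\<^esub> a | a. a \<in> A} \<and>
        x [^]\<^bsub>G\<^esub> (4::nat) = \<one>\<^bsub>G\<^esub> \<and>
        x [^]\<^bsub>G\<^esub> (2::nat) \<in> A \<and> x [^]\<^bsub>G\<^esub> (2::nat) \<noteq> \<one>\<^bsub>G\<^esub> \<and>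
        (\<forall>a\<in>A. inv\<^bsub>G\<^esub> x \<otimes>\<^bsub>G\<^esub> a \<otimes>\<^bsub>G\<^esub> x = inv\<^bsub>G\<^esub> a))"

definition Z2m_Z4 :: "nat \<Rightarrow> ((nat \<Rightarrow> int) \<times> int) monoid" where
  "Z2m_Z4 m = product_group {..<m} (\<lambda>_. integer_mod_group 2) \<times>\<times> integer_mod_group 4"

definition exponent_two :: "('a, 'b) monoid_scheme \<Rightarrow> 'a set \<Rightarrow> bool" where
  "exponent_two G A \<longleftrightarrow> A \<noteq> {\<one>\<^bsub>G\<^esub>} \<and> (\<forall>a\<in>A. a [^]\<^bsub>G\<^esub> (2::nat) = \<one>\<^bsub>G\<^esub>)"

definition quasi_antichain :: "'a set set \<Rightarrow> nat \<Rightarrow> bool" where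
  "quasi_antichain L w \<longleftrightarrow> (\<exists>bot top S. L = {bot, top} \<union> S \<and> bot \<noteq> top \<and>
      bot \<notin> S \<and> top \<notin> S \<and> finite S \<and> card S = w \<and>
      (\<forall>H\<in>L. bot \<subseteq> H \<and> H \<subseteq> top) \<and>
      (\<forall>H\<in>S. \<forall>K\<in>S. H \<subseteq> K \<longrightarrow> H = K))"

end

theory Submission
  imports Defs
begin


locale dic = group G for G (structure) +
  fixes A and x
  assumes finG: "finite (carrier G)" and subA: "subgroup A G"
  and commA: "\<And>a b. a\<in>A \<Longrightarrow> b\<in>A \<Longrightarrow> a \<otimes> b = b \<otimes> a"
  and xG: "x \<in> carrier G" and xnA: "x \<notin> A"
  and carrG: "carrier G = A \<union> {x \<otimes> a | a. a \<in> A}"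
  and x4: "x [^] (4::nat) = \<one>" and x2A: "x [^] (2::nat) \<in> A" and x2: "x [^] (2::nat) \<noteq> \<one>"
  and conj: "\<And>a. a\<in>A \<Longrightarrow> inv x \<otimes> a \<otimes> x = inv a"
begin

lemma AG[simp]: "a \<in> A \<Longrightarrow> a \<in> carrier G"
  using subgroup.subset[OF subA] by blast
lemma A_one[simp]: "\<one> \<in> A" by (rule subgroup.one_closed[OF subA])
lemma A_mult[simp]: "a \<in> A \<Longrightarrow> b \<in> A \<Longrightarrow> a \<otimes> b \<in> A" by (rule subgroup.m_closed[OF subA])
lemma A_inv[simp]: "a \<in> A \<Longrightarrow> inv a \<in> A" by (rule subgroup.m_inv_closed[OF subA])

definition "s = x \<otimes> x"
lemma s_pow: "x [^] (2::nat) = s" by (simp add: s_def numeral_2_eq_2 xG)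
lemma sA[simp]: "s \<in> A" using x2A s_pow by simp
lemma s_ne: "s \<noteq> \<one>" using x2 s_pow by simp
lemma ss: "s \<otimes> s = \<one>"
proof -
  have "x \<otimes> x \<otimes> x \<otimes> x = \<one>"
    using x4 xG by (simp add: numeral_eq_Suc)
  then show ?thesis using xG by (simp add: s_def m_assoc)
qed

lemma ax: "a \<in> A \<Longrightarrow> a \<otimes> x = x \<otimes> inv a"
proof -
  assume a: "a \<in> A"
  have "x \<otimes> (inv x \<otimes> a \<otimes> x) = x \<otimes> inv a" using conj[OF a] by simp
  then show ?thesis using a xG by (simp add: m_assoc[symmetric])
qed

lemma xa: "a \<in> A \<Longrightarrow> x \<otimes> a = inv a \<otimes> x"
  using ax[of "inv a"] by simp

lemma M1: "a \<in> A \<Longrightarrow> b \<in> A \<Longrightarrow> (x \<otimes> a) \<otimes> (x \<otimes> b) = s \<otimes> (inv a \<otimes> b)"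
proof -
  assume a: "a \<in> A" and b: "b \<in> A"
  have "(x \<otimes> a) \<otimes> (x \<otimes> b) = x \<otimes> (a \<otimes> x) \<otimes> b" using a b xG by (simp add: m_assoc)
  also have "\<dots> = x \<otimes> (x \<otimes> inv a) \<otimes> b" using ax[OF a] by simp
  also have "\<dots> = s \<otimes> (inv a \<otimes> b)" using a b xG by (simp add: s_def m_assoc)
  finally show ?thesis .
qed

lemma M2: "a \<in> A \<Longrightarrow> b \<in> A \<Longrightarrow> a \<otimes> (x \<otimes> b) = x \<otimes> (inv a \<otimes> b)"
proof -
  assume a: "a \<in> A" and b: "b \<in> A"
  have "a \<otimes> (x \<otimes> b) = (a \<otimes> x) \<otimes> b" using a b xG by (simp add: m_assoc)
  also have "\<dots> = (x \<otimes> inv a) \<otimes> b" using ax[OF a] by simp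
  finally show ?thesis using a b xG by (simp add: m_assoc)
qed

lemma M3: "a \<in> A \<Longrightarrow> b \<in> A \<Longrightarrow> (x \<otimes> a) \<otimes> b = x \<otimes> (a \<otimes> b)"
  using xG by (simp add: m_assoc)

lemma xa_nA: "a \<in> A \<Longrightarrow> x \<otimes> a \<notin> A"
proof
  assume a: "a \<in> A" and "x \<otimes> a \<in> A"
  then have "x \<otimes> a \<otimes> inv a \<in> A" by simp
  then show False using a xG xnA by (simp add: m_assoc)
qed

lemma s_comm: "a \<in> A \<Longrightarrow> s \<otimes> a = a \<otimes> s" using commA[OF sA] by blast

lemma inv_s: "inv s = s" using ss by (simp add: inv_equality)

lemma C1: "c \<in> A \<Longrightarrow> b \<in> A \<Longrightarrow> (c \<otimes> (x \<otimes> b) = (x \<otimes> b) \<otimes> c \<longleftrightarrow> c \<otimes> c = \<one>)"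
proof -
  assume c: "c \<in> A" and b: "b \<in> A"
  have "c \<otimes> (x \<otimes> b) = (x \<otimes> b) \<otimes> c \<longleftrightarrow> x \<otimes> (inv c \<otimes> b) = x \<otimes> (b \<otimes> c)"
    using M2 M3 b c by simp
  also have "\<dots> \<longleftrightarrow> inv c \<otimes> b = b \<otimes> c" using b c xG by simp
  also have "\<dots> \<longleftrightarrow> b \<otimes> inv c = b \<otimes> c" using commA b c by simp
  also have "\<dots> \<longleftrightarrow> inv c = c" using b c by simp
  also have "\<dots> \<longleftrightarrow> c \<otimes> c = \<one>" using c
    by (metis AG inv_equality r_inv)
  finally show ?thesis .
qed


lemma A_comm: "a \<in> A \<Longrightarrow> b \<in> A \<Longrightarrow> a \<otimes> b = b \<otimes> a" by (rule commA)
lemma A_lcomm: "a \<in> A \<Longrightarrow> b \<in> A \<Longrightarrow> c \<in> A \<Longrightarrow> a \<otimes> (b \<otimes> c) = b \<otimes> (a \<otimes> c)"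
proof -
  assume a: "a \<in> A" and b: "b \<in> A" and c: "c \<in> A"
  have "a \<otimes> (b \<otimes> c) = (a \<otimes> b) \<otimes> c" using a b c by (simp add: m_assoc)
  also have "\<dots> = (b \<otimes> a) \<otimes> c" using commA[OF a b] by simp
  finally show ?thesis using a b c by (simp add: m_assoc)
qed
lemma A_canc1: "a \<in> A \<Longrightarrow> b \<in> A \<Longrightarrow> a \<otimes> (b \<otimes> inv a) = b"
  using A_lcomm[of a b "inv a"] by (simp add: m_assoc[symmetric])
lemma A_canc2: "a \<in> A \<Longrightarrow> b \<in> A \<Longrightarrow> inv a \<otimes> (b \<otimes> a) = b"
  using A_lcomm[of "inv a" b a] by (simp add: m_assoc[symmetric])
lemma A_canc3: "a \<in> A \<Longrightarrow> b \<in> A \<Longrightarrow> a \<otimes> (inv a \<otimes> b) = b"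
  by (simp add: m_assoc[symmetric])
lemma A_canc4: "a \<in> A \<Longrightarrow> b \<in> A \<Longrightarrow> inv a \<otimes> (a \<otimes> b) = b"
  by (simp add: m_assoc[symmetric])
lemma A_canc5: "a \<in> A \<Longrightarrow> b \<in> A \<Longrightarrow> c \<in> A \<Longrightarrow> a \<otimes> (b \<otimes> (inv a \<otimes> c)) = b \<otimes> c"
  using A_lcomm[of a b "inv a \<otimes> c"] A_canc3[of a c] by simp
lemma A_canc6: "a \<in> A \<Longrightarrow> b \<in> A \<Longrightarrow> c \<in> A \<Longrightarrow> inv a \<otimes> (b \<otimes> (a \<otimes> c)) = b \<otimes> c"
  using A_lcomm[of "inv a" b "a \<otimes> c"] A_canc4[of a c] by simp
lemmas A_ac = m_assoc A_comm A_lcomm A_canc1 A_canc2 A_canc3 A_canc4 A_canc5 A_canc6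

lemma A_inv_mult: "a \<in> A \<Longrightarrow> b \<in> A \<Longrightarrow> inv (a \<otimes> b) = inv a \<otimes> inv b"
  using inv_mult_group[of a b] commA[of "inv a" "inv b"] by simp

lemma C2: "c \<in> A \<Longrightarrow> b \<in> A \<Longrightarrow> ((x \<otimes> c) \<otimes> (x \<otimes> b) = (x \<otimes> b) \<otimes> (x \<otimes> c) \<longleftrightarrow> c \<otimes> c = b \<otimes> b)"
proof -
  assume c: "c \<in> A" and b: "b \<in> A"
  have "(x \<otimes> c) \<otimes> (x \<otimes> b) = (x \<otimes> b) \<otimes> (x \<otimes> c) \<longleftrightarrow> s \<otimes> (inv c \<otimes> b) = s \<otimes> (inv b \<otimes> c)"
    using M1 b c by simp
  also have "\<dots> \<longleftrightarrow> inv c \<otimes> b = inv b \<otimes> c" using b c by simp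
  also have "\<dots> \<longleftrightarrow> (c \<otimes> b) \<otimes> (inv c \<otimes> b) = (c \<otimes> b) \<otimes> (inv b \<otimes> c)" using b c by simp
  also have "(c \<otimes> b) \<otimes> (inv c \<otimes> b) = b \<otimes> b" using b c
    by (simp add: A_ac)
  also have "(c \<otimes> b) \<otimes> (inv b \<otimes> c) = c \<otimes> c" using b c
    by (simp add: A_ac)
  finally show ?thesis by auto
qed

definition "Om = {a \<in> A. a \<otimes> a = \<one>}"

lemma Om_A: "Om \<subseteq> A" by (auto simp: Om_def)
lemma Om_AI: "a \<in> Om \<Longrightarrow> a \<in> A" by (auto simp: Om_def)
lemma Om_sq: "a \<in> Om \<Longrightarrow> a \<otimes> a = \<one>" by (auto simp: Om_def)
lemma one_Om[simp]: "\<one> \<in> Om" by (simp add: Om_def)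
lemma s_Om[simp]: "s \<in> Om" by (simp add: Om_def ss)
lemma Om_inv: "a \<in> Om \<Longrightarrow> inv a = a"
  using Om_sq by (metis AG Om_AI inv_equality)
lemma Om_mult[simp]: "a \<in> Om \<Longrightarrow> b \<in> Om \<Longrightarrow> a \<otimes> b \<in> Om"
proof -
  assume a: "a \<in> Om" and b: "b \<in> Om"
  have aA: "a \<in> A" and bA: "b \<in> A" using a b Om_AI by auto
  have "(a \<otimes> b) \<otimes> (a \<otimes> b) = (a \<otimes> a) \<otimes> (b \<otimes> b)" using aA bA
    by (simp add: A_ac)
  then show ?thesis using aA bA Om_sq[OF a] Om_sq[OF b] by (simp add: Om_def)
qed
lemma Om_inv_closed[simp]: "a \<in> Om \<Longrightarrow> inv a \<in> Om" using Om_inv by simp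

lemma finA: "finite A" using finG subgroup.subset[OF subA] finite_subset by blast
lemma finOm: "finite Om" using finA Om_A finite_subset by blast

lemma Om_central: "a \<in> Om \<Longrightarrow> g \<in> carrier G \<Longrightarrow> a \<otimes> g = g \<otimes> a"
proof -
  assume a: "a \<in> Om" and g: "g \<in> carrier G"
  have aA: "a \<in> A" using a Om_AI by auto
  show ?thesis
  proof (cases "g \<in> A")
    case True then show ?thesis using commA aA by blast
  next
    case False
    then obtain b where b: "b \<in> A" "g = x \<otimes> b" using g carrG by auto
    then show ?thesis using C1[OF aA b(1)] Om_sq[OF a] by simp
  qed
qed

definition "xs S = (\<lambda>a. x \<otimes> a) ` S"

lemma carr: "carrier G = A \<union> xs A" using carrG by (auto simp: xs_def)
lemma xs_disj: "S \<subseteq> A \<Longrightarrow> A \<inter> xs S = {}" using xa_nA by (auto simp: xs_def)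
lemma xs_card: "S \<subseteq> A \<Longrightarrow> card (xs S) = card S"
  unfolding xs_def
  by (rule card_image) (auto simp: inj_on_def xG subset_iff)
lemma card_G: "card (carrier G) = 2 * card A"
proof -
  have "card (carrier G) = card A + card (xs A)"
    using carr xs_disj[of A] finA xs_card[of A]
    by (metis card_Un_disjoint card.infinite card_0_eq dual_order.refl finite_imageI xs_def)
  then show ?thesis using xs_card[of A] by simp
qed

lemma nonab_card: "a0 \<in> A \<Longrightarrow> a0 \<notin> Om \<Longrightarrow> 2 * card Om \<le> card A"
proof -
  assume a0: "a0 \<in> A" "a0 \<notin> Om"
  let ?T = "(\<lambda>u. a0 \<otimes> u) ` Om"
  have T1: "card ?T = card Om"
    by (rule card_image) (use a0 Om_AI in \<open>auto simp: inj_on_def\<close>)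
  have T2: "?T \<inter> Om = {}"
  proof (rule ccontr)
    assume "?T \<inter> Om \<noteq> {}"
    then obtain u where o: "u \<in> Om" "a0 \<otimes> u \<in> Om" by auto
    then have "a0 \<otimes> u \<otimes> inv u \<in> Om" by simp
    then show False using o a0 Om_AI by (simp add: m_assoc)
  qed
  have T3: "?T \<union> Om \<subseteq> A" using a0 Om_AI by auto
  have "card (?T \<union> Om) = 2 * card Om"
    using T1 T2 finOm by (simp add: card_Un_disjoint)
  then show ?thesis using card_mono[OF finA T3] by simp
qed


lemma sub_carr: "subgroup H G \<Longrightarrow> H \<subseteq> carrier G" by (rule subgroup.subset)
lemma sub_fin: "subgroup H G \<Longrightarrow> finite H" using sub_carr finG finite_subset by blast

lemma cent_iff: "g \<in> centralizer G H \<longleftrightarrow> g \<in> carrier G \<and> (\<forall>h\<in>H. g \<otimes> h = h \<otimes> g)"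
  by (simp add: centralizer_def)

lemma cent_fin: "finite (centralizer G H)"
  using finG by (rule finite_subset[rotated]) (auto simp: cent_iff)

lemma cent_Om: "H \<subseteq> Om \<Longrightarrow> centralizer G H = carrier G"
  using Om_central by (auto simp: cent_iff subset_iff)

lemma in_xs: "g \<in> carrier G \<Longrightarrow> g \<notin> A \<Longrightarrow> \<exists>b\<in>A. g = x \<otimes> b"
  using carrG by auto

lemma cent_A: assumes "H \<subseteq> A" "h \<in> H" "h \<notin> Om" shows "centralizer G H = A"
proof
  show "A \<subseteq> centralizer G H"
  proof
    fix g assume g: "g \<in> A"
    show "g \<in> centralizer G H" using g assms(1) by (auto simp: cent_iff intro: commA)
  qed
  show "centralizer G H \<subseteq> A"
  proof
    fix g assume g: "g \<in> centralizer G H"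
    show "g \<in> A"
    proof (rule ccontr)
      assume "g \<notin> A"
      then obtain b where b: "b \<in> A" "g = x \<otimes> b" using in_xs g by (auto simp: cent_iff)
      have hA: "h \<in> A" using assms by auto
      have "g \<otimes> h = h \<otimes> g" using g assms(2) by (auto simp: cent_iff)
      then have "h \<otimes> h = \<one>" using C1[OF hA b(1)] b by simp
      then show False using assms hA by (simp add: Om_def)
    qed
  qed
qed

lemma cent_x: assumes "b \<in> A" "x \<otimes> b \<in> H"
  shows "centralizer G H \<subseteq> Om \<union> xs {c \<in> A. c \<otimes> c = b \<otimes> b}"
proof
  fix g assume g: "g \<in> centralizer G H"
  then have gc: "g \<otimes> (x \<otimes> b) = (x \<otimes> b) \<otimes> g" and gG: "g \<in> carrier G"
    using assms by (auto simp: cent_iff)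
  show "g \<in> Om \<union> xs {c \<in> A. c \<otimes> c = b \<otimes> b}"
  proof (cases "g \<in> A")
    case True
    then show ?thesis using C1[OF True assms(1)] gc by (simp add: Om_def)
  next
    case False
    then obtain c where c: "c \<in> A" "g = x \<otimes> c" using in_xs gG by auto
    then have "c \<otimes> c = b \<otimes> b" using C2[OF c(1) assms(1)] gc by simp
    then show ?thesis using c by (auto simp: xs_def)
  qed
qed

lemma cent_x2: assumes "b \<in> A" "x \<otimes> b \<in> H" "k \<in> H" "k \<in> A" "k \<notin> Om"
  shows "centralizer G H \<subseteq> Om"
proof
  fix g assume g: "g \<in> centralizer G H"
  then have gc: "g \<otimes> (x \<otimes> b) = (x \<otimes> b) \<otimes> g" and gk: "g \<otimes> k = k \<otimes> g" and gG: "g \<in> carrier G"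
    using assms by (auto simp: cent_iff)
  show "g \<in> Om"
  proof (cases "g \<in> A")
    case True
    then show ?thesis using C1[OF True assms(1)] gc by (simp add: Om_def)
  next
    case False
    then obtain c where c: "c \<in> A" "g = x \<otimes> c" using in_xs gG by auto
    then have "k \<otimes> k = \<one>" using C1[OF assms(4) c(1)] gk by simp
    then show ?thesis using assms by (simp add: Om_def)
  qed
qed

lemma sq_inv: "a \<in> carrier G \<Longrightarrow> (a \<otimes> a) \<otimes> (inv a \<otimes> inv a) = \<one>"
proof -
  assume a: "a \<in> carrier G"
  have "(a \<otimes> a) \<otimes> (inv a \<otimes> inv a) = a \<otimes> ((a \<otimes> inv a) \<otimes> inv a)"
    using a by (metis inv_closed m_assoc m_closed)
  then show ?thesis using a by simp
qed

lemma card_sq: assumes b: "b \<in> A" shows "card {c \<in> A. c \<otimes> c = b \<otimes> b} \<le> card Om"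
proof (rule card_inj_on_le[where f="\<lambda>c. inv b \<otimes> c"])
  show "inj_on (\<lambda>c. inv b \<otimes> c) {c \<in> A. c \<otimes> c = b \<otimes> b}" using b by (auto simp: inj_on_def)
  show "(\<lambda>c. inv b \<otimes> c) ` {c \<in> A. c \<otimes> c = b \<otimes> b} \<subseteq> Om"
  proof
    fix y assume "y \<in> (\<lambda>c. inv b \<otimes> c) ` {c \<in> A. c \<otimes> c = b \<otimes> b}"
    then obtain c where c: "c \<in> A" "c \<otimes> c = b \<otimes> b" "y = inv b \<otimes> c" by auto
    have "(inv b \<otimes> c) \<otimes> (inv b \<otimes> c) = (c \<otimes> c) \<otimes> (inv b \<otimes> inv b)"
      using b c(1) by (simp add: A_ac)
    also have "\<dots> = (b \<otimes> b) \<otimes> (inv b \<otimes> inv b)" using c(2) by simp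
    also have "\<dots> = \<one>" using b by (simp add: sq_inv)
    finally show "y \<in> Om" using c b by (simp add: Om_def)
  qed
  show "finite Om" by (rule finOm)
qed

lemma card_cent_x: assumes "b \<in> A" "x \<otimes> b \<in> H"
  shows "card (centralizer G H) \<le> 2 * card Om"
proof -
  let ?X = "{c \<in> A. c \<otimes> c = b \<otimes> b}"
  have "card (centralizer G H) \<le> card (Om \<union> xs ?X)"
    by (rule card_mono) (use cent_x[OF assms] finOm finA in \<open>auto simp: xs_def\<close>)
  also have "\<dots> \<le> card Om + card (xs ?X)" by (rule card_Un_le)
  also have "card (xs ?X) = card ?X" by (rule xs_card) auto
  finally show ?thesis using card_sq[OF assms(1)] by simp
qed

lemma card_H: assumes H: "subgroup H G" and b: "b \<in> A" and xb: "x \<otimes> b \<in> H"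
  shows "card H \<le> 2 * card (H \<inter> A)"
proof -
  let ?K = "H \<inter> A"
  have sub: "H \<subseteq> ?K \<union> (\<lambda>k. (x \<otimes> b) \<otimes> k) ` ?K"
  proof
    fix h assume h: "h \<in> H"
    show "h \<in> ?K \<union> (\<lambda>k. (x \<otimes> b) \<otimes> k) ` ?K"
    proof (cases "h \<in> A")
      case True then show ?thesis using h by auto
    next
      case False
      have hG: "h \<in> carrier G" using h H sub_carr by auto
      then obtain c where c: "c \<in> A" "h = x \<otimes> c" using in_xs False by auto
      let ?k = "inv (x \<otimes> b) \<otimes> h"
      have kH: "?k \<in> H" using H h xb by (simp add: subgroup.m_closed subgroup.m_inv_closed)
      have e1: "inv x \<otimes> (x \<otimes> c) = c" using c xG by (simp add: m_assoc[symmetric])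
      have "?k = inv b \<otimes> (inv x \<otimes> (x \<otimes> c))" using b c xG by (simp add: inv_mult_group m_assoc)
      then have "?k = inv b \<otimes> c" using e1 by simp
      then have kA: "?k \<in> A" using b c by simp
      have "h = (x \<otimes> b) \<otimes> ?k" using hG b xG by (simp add: m_assoc[symmetric])
      then show ?thesis using kH kA by auto
    qed
  qed
  have "card H \<le> card (?K \<union> (\<lambda>k. (x \<otimes> b) \<otimes> k) ` ?K)"
    by (rule card_mono[OF _ sub]) (use finA in auto)
  also have "\<dots> \<le> card ?K + card ((\<lambda>k. (x \<otimes> b) \<otimes> k) ` ?K)" by (rule card_Un_le)
  also have "card ((\<lambda>k. (x \<otimes> b) \<otimes> k) ` ?K) \<le> card ?K" by (rule card_image_le) (use finA in auto)
  finally show ?thesis by simp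
qed


lemma eq_mono: fixes a b c d :: nat
  assumes "a \<le> b" "c \<le> d" "a * c = b * d" "0 < b" "0 < c" shows "a = b \<and> c = d"
proof -
  have "a * c \<le> b * c" using assms(1) by simp
  moreover have "b * c \<le> b * d" using assms(2) by simp
  ultimately have e1: "a * c = b * c" and e2: "b * c = b * d" using assms(3) by linarith+
  from e1 assms(5) have "a = b" by simp
  moreover from e2 assms(4) have "c = d" by simp
  ultimately show ?thesis by simp
qed

lemma one_H: "subgroup H G \<Longrightarrow> \<one> \<in> H" by (rule subgroup.one_closed)
lemma card_H_pos: "subgroup H G \<Longrightarrow> 0 < card H"
  using sub_fin one_H card_gt_0_iff by blast
lemma card_C_pos: "subgroup H G \<Longrightarrow> 0 < card (centralizer G H)"
proof -
  assume H: "subgroup H G"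
  have "\<one> \<in> centralizer G H" using sub_carr[OF H] by (auto simp: cent_iff)
  then show ?thesis using cent_fin card_gt_0_iff by blast
qed
lemma card_A_pos: "0 < card A" using finA A_one card_gt_0_iff by blast

lemma bound_nonab:
  assumes a0: "a0 \<in> A" "a0 \<notin> Om" and H: "subgroup H G"
  shows "cd_measure G H \<le> card A * card A \<and>
    (cd_measure G H = card A * card A \<longrightarrow> Om \<subseteq> H \<and> (H = A \<or> 2 * card Om = card A))"
proof -
  define N where "N = card A"
  define q where "q = card Om"
  have q2: "2 * q \<le> N" using nonab_card[OF a0] by (simp add: N_def q_def)
  have Np: "0 < N" using card_A_pos by (simp add: N_def)
  have Hp: "0 < card H" by (rule card_H_pos[OF H])
  have Cp: "0 < card (centralizer G H)" by (rule card_C_pos[OF H])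
  have HG: "H \<subseteq> carrier G" by (rule sub_carr[OF H])
  have m: "cd_measure G H = card H * card (centralizer G H)" by (simp add: cd_measure_def)
  show ?thesis
  proof (cases "H \<subseteq> A")
    case HA: True
    show ?thesis
    proof (cases "H \<subseteq> Om")
      case True
      have C: "card (centralizer G H) = 2 * N" using cent_Om[OF True] card_G by (simp add: N_def)
      have cH: "card H \<le> q" unfolding q_def by (rule card_mono[OF finOm True])
      have m2: "cd_measure G H = (2 * card H) * N" using m C by simp
      have le: "2 * card H \<le> N" using cH q2 by simp
      have "cd_measure G H \<le> N * N" using m2 le by simp
      moreover have "cd_measure G H = N * N \<longrightarrow> Om \<subseteq> H \<and> (H = A \<or> 2 * q = N)"
      proof
        assume "cd_measure G H = N * N"
        then have "2 * card H = N" using m2 Np by simp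
        then have "card H = q" using cH q2 by simp
        then have "H = Om" using card_subset_eq[OF finOm True] q_def by simp
        then show "Om \<subseteq> H \<and> (H = A \<or> 2 * q = N)" using \<open>2 * card H = N\<close> \<open>card H = q\<close> by simp
      qed
      ultimately show ?thesis by (simp add: N_def q_def)
    next
      case False
      then obtain h where h: "h \<in> H" "h \<notin> Om" by auto
      have C: "card (centralizer G H) = N" using cent_A[OF HA h] by (simp add: N_def)
      have cH: "card H \<le> N" unfolding N_def by (rule card_mono[OF finA HA])
      have "cd_measure G H \<le> N * N" using m C cH by simp
      moreover have "cd_measure G H = N * N \<longrightarrow> Om \<subseteq> H \<and> (H = A \<or> 2 * q = N)"
      proof
        assume "cd_measure G H = N * N"
        then have "card H = N" using m C Np by simp
        then have "H = A" using card_subset_eq[OF finA HA] N_def by simp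
        then show "Om \<subseteq> H \<and> (H = A \<or> 2 * q = N)" using Om_A by simp
      qed
      ultimately show ?thesis by (simp add: N_def q_def)
    qed
  next
    case False
    then obtain h where h: "h \<in> H" "h \<notin> A" by auto
    then obtain b where b: "b \<in> A" "h = x \<otimes> b" using in_xs HG by blast
    have xb: "x \<otimes> b \<in> H" using h b by simp
    show ?thesis
    proof (cases "H \<inter> A \<subseteq> Om")
      case True
      have cK: "card (H \<inter> A) \<le> q" unfolding q_def by (rule card_mono[OF finOm True])
      have cH: "card H \<le> 2 * card (H \<inter> A)" by (rule card_H[OF H b(1) xb])
      have cC: "card (centralizer G H) \<le> 2 * q" unfolding q_def by (rule card_cent_x[OF b(1) xb])
      have cH': "card H \<le> N" using cH cK q2 by simp
      have cC': "card (centralizer G H) \<le> N" using cC q2 by simp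
      have "cd_measure G H \<le> N * N" using m cH' cC' mult_le_mono by simp
      moreover have "cd_measure G H = N * N \<longrightarrow> Om \<subseteq> H \<and> (H = A \<or> 2 * q = N)"
      proof
        assume "cd_measure G H = N * N"
        then have "card H = N" using eq_mono[OF cH' cC' _ Np Cp] m by simp
        then have "card (H \<inter> A) = q" "2 * q = N" using cH cK q2 by simp_all
        then have "H \<inter> A = Om" using card_subset_eq[OF finOm True] q_def by simp
        then show "Om \<subseteq> H \<and> (H = A \<or> 2 * q = N)" using \<open>2 * q = N\<close> by auto
      qed
      ultimately show ?thesis by (simp add: N_def q_def)
    next
      case False
      then obtain k where k: "k \<in> H" "k \<in> A" "k \<notin> Om" by auto
      have CO: "centralizer G H \<subseteq> Om" by (rule cent_x2[OF b(1) xb k])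
      have cC: "card (centralizer G H) \<le> q" unfolding q_def by (rule card_mono[OF finOm CO])
      have cH: "card H \<le> 2 * N" using card_mono[OF finG HG] card_G by (simp add: N_def)
      have le1: "card H * card (centralizer G H) \<le> (2 * N) * q" using cH cC mult_le_mono by blast
      have le2: "(2 * N) * q \<le> N * N" using q2 by simp
      have "cd_measure G H \<le> N * N" using m le_trans[OF le1 le2] by simp
      moreover have "cd_measure G H = N * N \<longrightarrow> Om \<subseteq> H \<and> (H = A \<or> 2 * q = N)"
      proof
        assume e: "cd_measure G H = N * N"
        have qp: "0 < 2 * N" using Np by simp
        have e2: "card H * card (centralizer G H) = (2 * N) * q" using e m le1 le2 by linarith
        have "card H = 2 * N" using eq_mono[OF cH cC e2 qp Cp] by simp
        then have "H = carrier G" using card_subset_eq[OF finG HG] card_G N_def by simp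
        moreover have "2 * q = N" using e2 e m \<open>card H = 2 * N\<close> eq_mono[OF cH cC e2 qp Cp] Np by simp
        ultimately show "Om \<subseteq> H \<and> (H = A \<or> 2 * q = N)" using Om_A by auto
      qed
      ultimately show ?thesis by (simp add: N_def q_def)
    qed
  qed
qed

lemma cent_all: assumes "Om = A" "H \<subseteq> carrier G" shows "centralizer G H = carrier G"
proof -
  have comm: "g \<otimes> h = h \<otimes> g" if g: "g \<in> carrier G" and h: "h \<in> carrier G" for g h
  proof (cases "g \<in> A")
    case True then show ?thesis using Om_central[of g h] assms h by simp
  next
    case False
    then obtain c where c: "c \<in> A" "g = x \<otimes> c" using in_xs g by blast
    show ?thesis
    proof (cases "h \<in> A")
      case True then show ?thesis using Om_central[of h g] assms g by simp
    next
      case False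
      then obtain b where b: "b \<in> A" "h = x \<otimes> b" using in_xs h by blast
      have "c \<otimes> c = b \<otimes> b" using b c assms Om_sq by simp
      then show ?thesis using C2[OF c(1) b(1)] b c by simp
    qed
  qed
  show ?thesis
  proof
    show "centralizer G H \<subseteq> carrier G" by (auto simp: cent_iff)
    show "carrier G \<subseteq> centralizer G H"
    proof
      fix g assume g: "g \<in> carrier G"
      have "\<forall>h\<in>H. g \<otimes> h = h \<otimes> g" using comm[OF g] assms(2) by blast
      then show "g \<in> centralizer G H" using g by (simp add: cent_iff)
    qed
  qed
qed

lemma bound_ab: assumes ab: "Om = A" and H: "subgroup H G"
  shows "cd_measure G H \<le> card (carrier G) * card (carrier G) \<and>
    (cd_measure G H = card (carrier G) * card (carrier G) \<longrightarrow> H = carrier G)"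
proof -
  have HG: "H \<subseteq> carrier G" by (rule sub_carr[OF H])
  have m: "cd_measure G H = card H * card (carrier G)"
    using cent_all[OF ab HG] by (simp add: cd_measure_def)
  have cH: "card H \<le> card (carrier G)" by (rule card_mono[OF finG HG])
  have p: "0 < card (carrier G)" using card_G card_A_pos by simp
  show ?thesis using m cH p card_subset_eq[OF finG HG] by simp
qed


lemma inv_x: assumes b: "b \<in> A" shows "inv (x \<otimes> b) = x \<otimes> (b \<otimes> s)"
proof (rule inv_equality)
  have "inv (b \<otimes> s) \<otimes> b = inv s" using b by (simp add: A_inv_mult A_ac)
  then have "(x \<otimes> (b \<otimes> s)) \<otimes> (x \<otimes> b) = s \<otimes> inv s" using M1[of "b \<otimes> s" b] b by simp
  then show "(x \<otimes> (b \<otimes> s)) \<otimes> (x \<otimes> b) = \<one>" by simp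
  show "x \<otimes> b \<in> carrier G" using b xG by simp
  show "x \<otimes> (b \<otimes> s) \<in> carrier G" using b xG by simp
qed

lemma xb_xc: assumes H: "subgroup H G" and b: "b \<in> A" and c: "c \<in> A"
  and xb: "x \<otimes> b \<in> H" and xc: "x \<otimes> c \<in> H" shows "inv b \<otimes> c \<in> H"
proof -
  have kH: "inv (x \<otimes> b) \<otimes> (x \<otimes> c) \<in> H" using H xb xc by (simp add: subgroup.m_closed subgroup.m_inv_closed)
  have e1: "inv x \<otimes> (x \<otimes> c) = c" using c xG by (simp add: m_assoc[symmetric])
  have "inv (x \<otimes> b) \<otimes> (x \<otimes> c) = inv b \<otimes> (inv x \<otimes> (x \<otimes> c))" using b c xG by (simp add: inv_mult_group m_assoc)
  then show ?thesis using e1 kH by simp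
qed

lemma coset_card: assumes h: "h \<in> A" "h \<notin> Om"
  shows "card (Om \<union> (\<lambda>u. h \<otimes> u) ` Om) = 2 * card Om" "Om \<union> (\<lambda>u. h \<otimes> u) ` Om \<subseteq> A"
proof -
  let ?T = "(\<lambda>u. h \<otimes> u) ` Om"
  have T1: "card ?T = card Om"
    by (rule card_image) (use h Om_AI in \<open>auto simp: inj_on_def\<close>)
  have T2: "Om \<inter> ?T = {}"
  proof (rule ccontr)
    assume "Om \<inter> ?T \<noteq> {}"
    then obtain u where o: "u \<in> Om" "h \<otimes> u \<in> Om" by auto
    then have "h \<otimes> u \<otimes> inv u \<in> Om" by simp
    then show False using o h Om_AI by (simp add: m_assoc)
  qed
  show "card (Om \<union> ?T) = 2 * card Om"
    using T1 T2 finOm by (simp add: card_Un_disjoint)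
  show "Om \<union> ?T \<subseteq> A" using h Om_AI by auto
qed

lemma center_nonab: assumes a0: "a0 \<in> A" "a0 \<notin> Om" shows "group_center G = Om"
proof
  show "Om \<subseteq> group_center G"
  proof
    fix g assume g: "g \<in> Om"
    show "g \<in> group_center G" unfolding group_center_def cent_iff using Om_central[OF g] Om_AI[OF g] by auto
  qed
  show "group_center G \<subseteq> Om"
  proof
    fix g assume g: "g \<in> group_center G"
    then have gG: "g \<in> carrier G" and gc: "\<And>h. h \<in> carrier G \<Longrightarrow> g \<otimes> h = h \<otimes> g"
      by (auto simp: group_center_def cent_iff)
    show "g \<in> Om"
    proof (cases "g \<in> A")
      case True
      have "g \<otimes> (x \<otimes> \<one>) = (x \<otimes> \<one>) \<otimes> g" using gc xG by simp
      then show ?thesis using C1[OF True A_one] True by (simp add: Om_def)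
    next
      case False
      then obtain c where c: "c \<in> A" "g = x \<otimes> c" using in_xs gG by blast
      have "a0 \<otimes> (x \<otimes> c) = (x \<otimes> c) \<otimes> a0" using gc[of a0] a0 c by simp
      then have "a0 \<otimes> a0 = \<one>" using C1[OF a0(1) c(1)] by simp
      then show ?thesis using a0 by (simp add: Om_def)
    qed
  qed
qed

end

locale dic2 = dic +
  fixes a0
  assumes a0A: "a0 \<in> A" and a0O: "a0 \<notin> Om" and half: "2 * card Om = card A"
begin

lemma A_split: "A = Om \<union> (\<lambda>u. a0 \<otimes> u) ` Om"
proof -
  have "Om \<union> (\<lambda>u. a0 \<otimes> u) ` Om = A"
    using card_subset_eq[OF finA coset_card(2)[OF a0A a0O]] coset_card(1)[OF a0A a0O] half by simp
  then show ?thesis by simp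
qed

lemma between: assumes "Om \<subseteq> K" "K \<subseteq> A" and cl: "\<And>h u. h \<in> K \<Longrightarrow> u \<in> Om \<Longrightarrow> h \<otimes> u \<in> K"
  shows "K = Om \<or> K = A"
proof (cases "K \<subseteq> Om")
  case True then show ?thesis using assms by auto
next
  case False
  then obtain h where h: "h \<in> K" "h \<notin> Om" by auto
  have hA: "h \<in> A" using h assms by auto
  have sub: "Om \<union> (\<lambda>u. h \<otimes> u) ` Om \<subseteq> K" using assms h cl by auto
  have "card A \<le> card K" using card_mono[OF finite_subset[OF assms(2) finA] sub] coset_card(1)[OF hA h(2)] half by simp
  then have "K = A" using card_seteq[OF finA assms(2)] by simp
  then show ?thesis by simp
qed

definition "T c = Om \<union> xs ((\<lambda>u. c \<otimes> u) ` Om)"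

lemma T_mem1: "c \<in> A \<Longrightarrow> u \<in> Om \<Longrightarrow> x \<otimes> (c \<otimes> u) \<in> T c" by (auto simp: T_def xs_def)
lemma T_cases: "g \<in> T c \<Longrightarrow> g \<in> Om \<or> (\<exists>u\<in>Om. g = x \<otimes> (c \<otimes> u))" by (auto simp: T_def xs_def)

lemma T_sub: assumes c: "c \<in> A" shows "subgroup (T c) G"
proof (rule subgroupI)
  show "T c \<subseteq> carrier G" using c xG Om_AI by (auto simp: T_def xs_def)
  show "T c \<noteq> {}" unfolding T_def using one_Om by blast
  show "inv g \<in> T c" if g: "g \<in> T c" for g
  proof -
    from T_cases[OF g] show ?thesis
    proof
      assume "g \<in> Om" then show ?thesis by (simp add: T_def)
    next
      assume "\<exists>u\<in>Om. g = x \<otimes> (c \<otimes> u)"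
      then obtain u where u: "u \<in> Om" "g = x \<otimes> (c \<otimes> u)" by blast
      have uA: "u \<in> A" using u Om_AI by simp
      have "inv g = x \<otimes> (c \<otimes> (u \<otimes> s))" using inv_x[of "c \<otimes> u"] u uA c by (simp add: m_assoc)
      then show ?thesis using T_mem1[OF c, of "u \<otimes> s"] u by simp
    qed
  qed
  show "g \<otimes> h \<in> T c" if g: "g \<in> T c" and h: "h \<in> T c" for g h
  proof -
    from T_cases[OF g] T_cases[OF h] show ?thesis
    proof (elim disjE bexE)
      assume "g \<in> Om" "h \<in> Om" then show ?thesis by (simp add: T_def)
    next
      fix v assume gO: "g \<in> Om" and v: "v \<in> Om" "h = x \<otimes> (c \<otimes> v)"
      have gA: "g \<in> A" and vA: "v \<in> A" using gO v Om_AI by auto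
      have "g \<otimes> h = x \<otimes> (inv g \<otimes> (c \<otimes> v))" using M2 gA vA c v by simp
      also have "\<dots> = x \<otimes> (c \<otimes> (g \<otimes> v))" using Om_inv[OF gO] gA vA c by (simp add: A_ac)
      finally show ?thesis using T_mem1[OF c, of "g \<otimes> v"] gO v by simp
    next
      fix u assume u: "u \<in> Om" "g = x \<otimes> (c \<otimes> u)" and hO: "h \<in> Om"
      have hA: "h \<in> A" and uA: "u \<in> A" using hO u Om_AI by auto
      have "g \<otimes> h = x \<otimes> (c \<otimes> (u \<otimes> h))" using M3 hA uA c u by (simp add: m_assoc)
      then show ?thesis using T_mem1[OF c, of "u \<otimes> h"] hO u by simp
    next
      fix u v assume u: "u \<in> Om" "g = x \<otimes> (c \<otimes> u)" and v: "v \<in> Om" "h = x \<otimes> (c \<otimes> v)"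
      have uA: "u \<in> A" and vA: "v \<in> A" using u v Om_AI by auto
      have "g \<otimes> h = s \<otimes> (inv (c \<otimes> u) \<otimes> (c \<otimes> v))" using M1 u v uA vA c by simp
      also have "\<dots> = s \<otimes> (inv u \<otimes> v)" using uA vA c by (simp add: inv_mult_group m_assoc A_canc4)
      finally have "g \<otimes> h \<in> Om" using u v by simp
      then show ?thesis by (simp add: T_def)
    qed
  qed
qed

lemma Om_T: "Om \<subseteq> T c" by (simp add: T_def)

lemma T_card: assumes c: "c \<in> A" shows "card (T c) = card A"
proof -
  have i: "inj_on (\<lambda>u. c \<otimes> u) Om" using c Om_AI by (auto simp: inj_on_def)
  have sub: "(\<lambda>u. c \<otimes> u) ` Om \<subseteq> A" using c Om_AI by auto
  have "card (T c) = card Om + card (xs ((\<lambda>u. c \<otimes> u) ` Om))"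
    unfolding T_def
    by (rule card_Un_disjoint) (use finOm xs_disj[OF sub] Om_A in \<open>auto simp: xs_def\<close>)
  also have "card (xs ((\<lambda>u. c \<otimes> u) ` Om)) = card Om" using xs_card[OF sub] card_image[OF i] by simp
  finally show ?thesis using half by simp
qed

lemma T_x: "c \<in> A \<Longrightarrow> x \<otimes> c \<in> T c" using T_mem1[of c \<one>] by simp

lemma T_nA: "c \<in> A \<Longrightarrow> T c \<noteq> A" using T_x xa_nA by blast

lemma T_nOm: "c \<in> A \<Longrightarrow> T c \<noteq> Om" using T_x xa_nA Om_A by blast

lemma G_card2: "card (carrier G) = 2 * card A" by (rule card_G)

lemma T_nG: "c \<in> A \<Longrightarrow> T c \<noteq> carrier G" using T_card card_G card_A_pos by force

lemma T_cent: assumes c: "c \<in> A" shows "card (centralizer G (T c)) = card A"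
proof -
  have TG: "T c \<subseteq> carrier G" using subgroup.subset[OF T_sub[OF c]] .
  have comm: "g \<otimes> h = h \<otimes> g" if g: "g \<in> T c" and h: "h \<in> T c" for g h
  proof -
    from T_cases[OF g] T_cases[OF h] show ?thesis
    proof (elim disjE bexE)
      assume "g \<in> Om" then show ?thesis using Om_central h TG by blast
    next
      assume "g \<in> Om" then show ?thesis using Om_central h TG by blast
    next
      assume "h \<in> Om" then show ?thesis using Om_central g TG by (metis subsetD)
    next
      fix u v assume u: "u \<in> Om" "g = x \<otimes> (c \<otimes> u)" and v: "v \<in> Om" "h = x \<otimes> (c \<otimes> v)"
      have uA: "u \<in> A" and vA: "v \<in> A" using u v Om_AI by auto
      have "(c \<otimes> u) \<otimes> (c \<otimes> u) = (c \<otimes> c) \<otimes> (u \<otimes> u)" using c uA by (simp add: A_ac)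
      moreover have "(c \<otimes> v) \<otimes> (c \<otimes> v) = (c \<otimes> c) \<otimes> (v \<otimes> v)" using c vA by (simp add: A_ac)
      ultimately have "(c \<otimes> u) \<otimes> (c \<otimes> u) = (c \<otimes> v) \<otimes> (c \<otimes> v)" using Om_sq u v c by simp
      then show ?thesis using C2[of "c \<otimes> u" "c \<otimes> v"] u v uA vA c by simp
    qed
  qed
  have sub: "T c \<subseteq> centralizer G (T c)" using TG comm by (auto simp: cent_iff)
  have "card (T c) \<le> card (centralizer G (T c))" by (rule card_mono[OF cent_fin sub])
  moreover have "card (centralizer G (T c)) \<le> 2 * card Om" by (rule card_cent_x[OF c T_x[OF c]])
  ultimately show ?thesis using T_card[OF c] half by simp
qed

lemma T_mono: assumes c: "c \<in> A" and d: "d \<in> A" and cd: "inv c \<otimes> d \<in> Om" shows "T d \<subseteq> T c"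
proof
  fix g assume g: "g \<in> T d"
  from T_cases[OF g] show "g \<in> T c"
  proof
    assume "g \<in> Om" then show ?thesis by (simp add: T_def)
  next
    assume "\<exists>u\<in>Om. g = x \<otimes> (d \<otimes> u)"
    then obtain u where u: "u \<in> Om" "g = x \<otimes> (d \<otimes> u)" by blast
    have uA: "u \<in> A" using u Om_AI by simp
    have "c \<otimes> ((inv c \<otimes> d) \<otimes> u) = d \<otimes> u" using c d uA by (simp add: m_assoc[symmetric])
    then have "g = x \<otimes> (c \<otimes> ((inv c \<otimes> d) \<otimes> u))" using u by simp
    then show ?thesis using T_mem1[OF c, of "(inv c \<otimes> d) \<otimes> u"] cd u by simp
  qed
qed

lemma T_eq: assumes c: "c \<in> A" and d: "d \<in> A" and cd: "inv c \<otimes> d \<in> Om" shows "T d = T c"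
proof
  show "T d \<subseteq> T c" by (rule T_mono[OF c d cd])
  have "inv d \<otimes> c = inv (inv c \<otimes> d)" using c d by (simp add: inv_mult_group)
  then have "inv d \<otimes> c \<in> Om" using cd by simp
  then show "T c \<subseteq> T d" by (rule T_mono[OF d c])
qed

lemma T_two: assumes c: "c \<in> A" shows "T c = T \<one> \<or> T c = T a0"
proof -
  from c A_split have "c \<in> Om \<or> (\<exists>u\<in>Om. c = a0 \<otimes> u)" by auto
  then show ?thesis
  proof
    assume "c \<in> Om" then show ?thesis using T_eq[OF A_one c] by simp
  next
    assume "\<exists>u\<in>Om. c = a0 \<otimes> u"
    then obtain u where u: "u \<in> Om" "c = a0 \<otimes> u" by blast
    have "inv a0 \<otimes> c = u" using u a0A Om_AI by (simp add: m_assoc[symmetric])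
    then show ?thesis using T_eq[OF a0A c] u by simp
  qed
qed

lemma T_1_a0: "T \<one> \<noteq> T a0"
proof
  assume e: "T \<one> = T a0"
  have "x \<otimes> a0 \<in> T \<one>" using e T_x[OF a0A] by simp
  from T_cases[OF this] show False
  proof
    assume "x \<otimes> a0 \<in> Om" then show False using xa_nA[OF a0A] Om_A by blast
  next
    assume "\<exists>u\<in>Om. x \<otimes> a0 = x \<otimes> (\<one> \<otimes> u)"
    then obtain u where u: "u \<in> Om" "x \<otimes> a0 = x \<otimes> (\<one> \<otimes> u)" by blast
    then have "a0 = u" using a0A Om_AI xG by simp
    then show False using u a0O by simp
  qed
qed


lemma Om_sub: "subgroup Om G"
proof (rule subgroupI)
  show "Om \<subseteq> carrier G" using Om_A by auto
  show "Om \<noteq> {}" using one_Om by blast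
qed auto

lemma classify: assumes H: "subgroup H G" and OH: "Om \<subseteq> H"
  shows "H = Om \<or> H = A \<or> H = carrier G \<or> H = T \<one> \<or> H = T a0"
proof (cases "H \<subseteq> A")
  case True
  have cl: "h \<otimes> u \<in> H" if "h \<in> H" "u \<in> Om" for h u
    using subgroup.m_closed[OF H, of h u] that OH by blast
  have "H = Om \<or> H = A"
    by (rule between[OF OH True cl])
  then show ?thesis by blast
next
  case False
  then obtain h where h: "h \<in> H" "h \<notin> A" by auto
  then obtain b where b: "b \<in> A" "h = x \<otimes> b" using in_xs sub_carr[OF H] by blast
  have xb: "x \<otimes> b \<in> H" using h b by simp
  have cl: "h \<otimes> u \<in> H \<inter> A" if "h \<in> H \<inter> A" "u \<in> Om" for h u
  proof -
    have "h \<otimes> u \<in> H" using subgroup.m_closed[OF H, of h u] that OH by blast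
    moreover have "h \<otimes> u \<in> A" using that Om_AI by simp
    ultimately show ?thesis by simp
  qed
  have sOK: "Om \<subseteq> H \<inter> A" using OH Om_A by simp
  have "H \<inter> A = Om \<or> H \<inter> A = A"
    by (rule between[OF sOK _ cl]) simp
  then show ?thesis
  proof
    assume K: "H \<inter> A = Om"
    have "H = T b"
    proof
      show "H \<subseteq> T b"
      proof
        fix g assume g: "g \<in> H"
        show "g \<in> T b"
        proof (cases "g \<in> A")
          case True
          then have "g \<in> H \<inter> A" using g by simp
          then have "g \<in> Om" using K by simp
          then show ?thesis using Om_T by auto
        next
          case False
          then obtain c where c: "c \<in> A" "g = x \<otimes> c" using in_xs sub_carr[OF H] g by blast
          have "inv b \<otimes> c \<in> H" using xb_xc[OF H b(1) c(1) xb] c g by simp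
          then have "inv b \<otimes> c \<in> H \<inter> A" using b c by simp
          then have "inv b \<otimes> c \<in> Om" using K by simp
          moreover have "g = x \<otimes> (b \<otimes> (inv b \<otimes> c))" using c b by (simp add: A_canc3)
          ultimately show ?thesis using T_mem1[OF b(1)] by simp
        qed
      qed
      show "T b \<subseteq> H"
      proof
        fix g assume g: "g \<in> T b"
        from T_cases[OF g] show "g \<in> H"
        proof
          assume "g \<in> Om" then show ?thesis using OH by blast
        next
          assume "\<exists>u\<in>Om. g = x \<otimes> (b \<otimes> u)"
          then obtain u where u: "u \<in> Om" "g = x \<otimes> (b \<otimes> u)" by blast
          have "g = (x \<otimes> b) \<otimes> u" using u b Om_AI xG by (simp add: m_assoc)
          then show ?thesis using subgroup.m_closed[OF H xb] u OH by blast
        qed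
      qed
    qed
    then show ?thesis using T_two[OF b(1)] by blast
  next
    assume K: "H \<inter> A = A"
    have "H = carrier G"
    proof
      show "H \<subseteq> carrier G" by (rule sub_carr[OF H])
      show "carrier G \<subseteq> H"
      proof
        fix g assume g: "g \<in> carrier G"
        show "g \<in> H"
        proof (cases "g \<in> A")
          case True
          then have "g \<in> H \<inter> A" using K by simp
          then show ?thesis by simp
        next
          case False
          then obtain c where c: "c \<in> A" "g = x \<otimes> c" using in_xs g by blast
          have "inv b \<otimes> c \<in> H \<inter> A" using K b c by simp
          then have "inv b \<otimes> c \<in> H" by simp
          moreover have "g = (x \<otimes> b) \<otimes> (inv b \<otimes> c)" using b c xG by (simp add: m_assoc A_canc3)
          ultimately show ?thesis using subgroup.m_closed[OF H xb] by simp
        qed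
      qed
    qed
    then show ?thesis by blast
  qed
qed

lemma T_in: "c \<in> A \<Longrightarrow> subgroup (T c) G \<and> Om \<subseteq> T c" using T_sub Om_T by blast

lemma m_val: assumes H: "subgroup H G" and OH: "Om \<subseteq> H"
  shows "cd_measure G H = card A * card A"
proof -
  have q: "2 * card Om = card A" by (rule half)
  from classify[OF H OH] show ?thesis
  proof (elim disjE)
    assume e: "H = Om"
    show ?thesis using e cent_Om[of Om] card_G q by (simp add: cd_measure_def)
  next
    assume e: "H = A"
    show ?thesis using e cent_A[OF subset_refl a0A a0O] by (simp add: cd_measure_def)
  next
    assume e: "H = carrier G"
    have "centralizer G (carrier G) = Om" using center_nonab[OF a0A a0O] by (simp add: group_center_def)
    then show ?thesis using e card_G q by (simp add: cd_measure_def)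
  next
    assume e: "H = T \<one>"
    show ?thesis using e T_card[OF A_one] T_cent[OF A_one] by (simp add: cd_measure_def)
  next
    assume e: "H = T a0"
    show ?thesis using e T_card[OF a0A] T_cent[OF a0A] by (simp add: cd_measure_def)
  qed
qed

end

lemma cd_max_eqI:
  assumes "finite (carrier G)" "\<And>H. subgroup H G \<Longrightarrow> cd_measure G H \<le> M"
    "subgroup H0 G" "cd_measure G H0 = M"
  shows "cd_max G = M"
proof -
  have "{cd_measure G H | H. subgroup H G} = cd_measure G ` {H. subgroup H G}" by auto
  moreover have "finite {H. subgroup H G}"
    by (rule finite_subset[of _ "Pow (carrier G)"]) (use assms(1) in \<open>auto dest: subgroup.subset\<close>)
  ultimately have fin: "finite {cd_measure G H | H. subgroup H G}" by simp
  show ?thesis unfolding cd_max_def by (rule Max_eqI[OF fin]) (use assms in auto)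
qed

context dic2
begin

lemma cdmax: "cd_max G = card A * card A"
proof (rule cd_max_eqI[OF finG])
  show "cd_measure G H \<le> card A * card A" if "subgroup H G" for H
    using bound_nonab[OF a0A a0O that] by simp
  show "subgroup A G" by (rule subA)
  show "cd_measure G A = card A * card A" by (rule m_val[OF subA Om_A])
qed

lemma CD_eq: "CD_lattice G = {H. subgroup H G \<and> Om \<subseteq> H}"
proof -
  have "subgroup H G \<and> cd_measure G H = card A * card A \<longleftrightarrow> subgroup H G \<and> Om \<subseteq> H" for H
    using bound_nonab[OF a0A a0O] m_val by blast
  then show ?thesis unfolding CD_lattice_def cdmax by blast
qed

lemma QA: "quasi_antichain (CD_lattice G) 3"
  unfolding quasi_antichain_def
proof (intro exI conjI)
  let ?S = "{A, T \<one>, T a0}"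
  have xG': "x \<in> carrier G" by (rule xG)
  show "CD_lattice G = {Om, carrier G} \<union> ?S"
  proof
    show "CD_lattice G \<subseteq> {Om, carrier G} \<union> ?S" unfolding CD_eq using classify by blast
    show "{Om, carrier G} \<union> ?S \<subseteq> CD_lattice G" unfolding CD_eq
      using Om_sub subgroup_self subA Om_A T_in[OF A_one] T_in[OF a0A] by auto
  qed
  show "Om \<noteq> carrier G" using xG xnA Om_A by blast
  show "Om \<notin> ?S" using a0A a0O T_nOm[OF A_one] T_nOm[OF a0A] by auto
  show "carrier G \<notin> ?S" using xG xnA T_nG[OF A_one] T_nG[OF a0A] by auto
  show "finite ?S" by simp
  show "card ?S = 3" using T_nA[OF A_one] T_nA[OF a0A] T_1_a0 by (simp add: eq_commute)
  show "\<forall>H\<in>CD_lattice G. Om \<subseteq> H \<and> H \<subseteq> carrier G"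
    unfolding CD_eq using sub_carr by auto
  show "\<forall>H\<in>?S. \<forall>K\<in>?S. H \<subseteq> K \<longrightarrow> H = K"
  proof (intro ballI impI)
    fix H K assume H: "H \<in> ?S" and K: "K \<in> ?S" and HK: "H \<subseteq> K"
    have cH: "card H = card A" using H T_card[OF A_one] T_card[OF a0A] by auto
    have cK: "card K = card A" using K T_card[OF A_one] T_card[OF a0A] by auto
    have fK: "finite K" using K T_in[OF A_one] T_in[OF a0A] sub_fin subA by auto
    show "H = K" using card_subset_eq[OF fK HK] cH cK by simp
  qed
qed

lemma center_eq: "group_center G = Om" by (rule center_nonab[OF a0A a0O])

end



lemma Z_group: "group (Z2m_Z4 m)"
  unfolding Z2m_Z4_def by (intro DirProd_group product_group group_integer_mod_group)

lemma Z_carrier: "carrier (Z2m_Z4 m) = (\<Pi>\<^sub>E i\<in>{..<m}. {0..<2}) \<times> {0..<4}"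
  unfolding Z2m_Z4_def by (simp add: carrier_integer_mod_group)

lemma Z_mult: "(f, k) \<otimes>\<^bsub>Z2m_Z4 m\<^esub> (f', k') = ((\<lambda>i\<in>{..<m}. (f i + f' i) mod 2), (k + k') mod 4)"
  unfolding Z2m_Z4_def by simp

lemma Z_one: "\<one>\<^bsub>Z2m_Z4 m\<^esub> = ((\<lambda>i\<in>{..<m}. 0), 0)"
  unfolding Z2m_Z4_def by simp

lemma Z_sq: assumes z: "z \<in> carrier (Z2m_Z4 m)"
  shows "z \<otimes>\<^bsub>Z2m_Z4 m\<^esub> z = \<one>\<^bsub>Z2m_Z4 m\<^esub> \<longleftrightarrow> snd z \<in> {0, 2}"
proof -
  obtain f k where fk: "z = (f, k)" by (cases z)
  have f: "f \<in> (\<Pi>\<^sub>E i\<in>{..<m}. {0..<2})" and k: "k \<in> {0..<4}" using z fk Z_carrier by auto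
  have "(\<lambda>i\<in>{..<m}. (f i + f i) mod 2) = (\<lambda>i\<in>{..<m}. (0::int))"
    by (rule restrict_ext) presburger
  moreover have "(k + k) mod 4 = 0 \<longleftrightarrow> k \<in> {0, 2}" using k by auto
  ultimately show ?thesis using fk by (simp add: Z_mult Z_one)
qed

lemma Z_card: "card (carrier (Z2m_Z4 m)) = 2 * card {z \<in> carrier (Z2m_Z4 m). z \<otimes>\<^bsub>Z2m_Z4 m\<^esub> z = \<one>\<^bsub>Z2m_Z4 m\<^esub>}"
proof -
  let ?P = "(\<Pi>\<^sub>E i\<in>{..<m}. {0..<2::int})"
  have "{z \<in> carrier (Z2m_Z4 m). z \<otimes>\<^bsub>Z2m_Z4 m\<^esub> z = \<one>\<^bsub>Z2m_Z4 m\<^esub>} = ?P \<times> {0, 2}"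
    using Z_sq Z_carrier by auto
  then have "card {z \<in> carrier (Z2m_Z4 m). z \<otimes>\<^bsub>Z2m_Z4 m\<^esub> z = \<one>\<^bsub>Z2m_Z4 m\<^esub>} = card ?P * 2"
    by (simp add: card_cartesian_product)
  moreover have "card (carrier (Z2m_Z4 m)) = card ?P * 4"
    by (simp add: Z_carrier card_cartesian_product)
  ultimately show ?thesis by simp
qed

lemma Z_card2: "card (carrier (Z2m_Z4 m)) = 2 ^ m * 4"
  by (simp add: Z_carrier card_cartesian_product card_PiE)

context dic
begin

lemma iso_half: assumes "G\<lparr>carrier := A\<rparr> \<cong> Z2m_Z4 m" shows "2 * card Om = card A"
proof -
  let ?Z = "Z2m_Z4 m"
  obtain h where h: "h \<in> iso (G\<lparr>carrier := A\<rparr>) ?Z" using assms by (auto simp: is_iso_def)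
  have hom: "h \<in> hom (G\<lparr>carrier := A\<rparr>) ?Z" and bij: "bij_betw h A (carrier ?Z)"
    using h by (auto simp: iso_def)
  have gA: "group (G\<lparr>carrier := A\<rparr>)" by (rule subgroup.subgroup_is_group[OF subA is_group])
  have h1: "h \<one> = \<one>\<^bsub>?Z\<^esub>"
    using hom_one[OF hom gA Z_group] by simp
  have hm: "h (a \<otimes> b) = h a \<otimes>\<^bsub>?Z\<^esub> h b" if "a \<in> A" "b \<in> A" for a b
    using hom_mult[OF hom, of a b] that by simp
  have inj: "inj_on h A" using bij by (simp add: bij_betw_def)
  have img: "h ` A = carrier ?Z" using bij by (simp add: bij_betw_def)
  let ?Z2 = "{z \<in> carrier ?Z. z \<otimes>\<^bsub>?Z\<^esub> z = \<one>\<^bsub>?Z\<^esub>}"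
  have memO: "a \<in> Om \<longleftrightarrow> h a \<in> ?Z2" if a: "a \<in> A" for a
  proof -
    have "a \<otimes> a = \<one> \<longleftrightarrow> h (a \<otimes> a) = h \<one>" using inj a by (auto dest: inj_onD)
    also have "\<dots> \<longleftrightarrow> h a \<otimes>\<^bsub>?Z\<^esub> h a = \<one>\<^bsub>?Z\<^esub>" using hm[OF a a] h1 by simp
    finally show ?thesis using a img by (auto simp: Om_def)
  qed
  have "h ` Om = ?Z2"
  proof
    show "h ` Om \<subseteq> ?Z2" using memO Om_A by auto
    show "?Z2 \<subseteq> h ` Om"
    proof
      fix z assume z: "z \<in> ?Z2"
      then obtain a where a: "a \<in> A" "z = h a" using img by blast
      then have "a \<in> Om" using memO z by simp
      then show "z \<in> h ` Om" using a by blast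
    qed
  qed
  then have "card Om = card ?Z2" using card_image[OF inj_on_subset[OF inj Om_A]] by simp
  moreover have "card A = card (carrier ?Z)" using bij_betw_same_card[OF bij] .
  ultimately show ?thesis using Z_card[of m] by simp
qed


lemma A_pow: "a \<in> A \<Longrightarrow> a [^] (n::nat) \<in> A"
  by (induct n) simp_all

end

context dic2
begin

lemma a0G: "a0 \<in> carrier G" using a0A by simp

lemma a0sq: "a0 \<otimes> a0 \<in> Om"
proof -
  have "a0 \<otimes> a0 \<in> A" using a0A by simp
  then have "a0 \<otimes> a0 \<in> Om \<union> (\<lambda>u. a0 \<otimes> u) ` Om" using A_split[symmetric] by simp
  then have "a0 \<otimes> a0 \<in> Om \<or> (\<exists>u\<in>Om. a0 \<otimes> a0 = a0 \<otimes> u)" by blast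
  then show ?thesis
  proof
    assume "\<exists>u\<in>Om. a0 \<otimes> a0 = a0 \<otimes> u"
    then obtain u where u: "u \<in> Om" "a0 \<otimes> a0 = a0 \<otimes> u" by blast
    then have "a0 = u" using a0A Om_AI by simp
    then show ?thesis using u a0O by simp
  qed
qed

lemma a0_4: "a0 [^] (4::nat) = \<one>"
proof -
  have "a0 [^] (4::nat) = (a0 \<otimes> a0) \<otimes> (a0 \<otimes> a0)" using a0G by (simp add: numeral_eq_Suc m_assoc)
  then show ?thesis using Om_sq[OF a0sq] by simp
qed

lemma pow_mod4: "a0 [^] (n::nat) = a0 [^] (n mod 4)"
proof -
  have "a0 [^] n = a0 [^] (n mod 4 + 4 * (n div 4))" by simp
  also have "\<dots> = a0 [^] (n mod 4) \<otimes> a0 [^] (4 * (n div 4))" using nat_pow_mult[OF a0G] by simp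
  also have "a0 [^] (4 * (n div 4)) = (a0 [^] (4::nat)) [^] (n div 4)" using nat_pow_pow[OF a0G] by simp
  also have "\<dots> = \<one>" using a0_4 by simp
  finally show ?thesis using a0G by simp
qed

lemma a0_ne1: "a0 \<noteq> \<one>" using a0O one_Om by metis

lemma pow_ne: "0 < d \<Longrightarrow> d < 4 \<Longrightarrow> a0 [^] (d::nat) \<noteq> \<one>"
proof -
  assume d: "0 < d" "d < 4"
  have p1: "a0 [^] (1::nat) = a0" using a0G by simp
  have p2: "a0 [^] (2::nat) = a0 \<otimes> a0" using a0G by (simp add: numeral_2_eq_2)
  have p4: "a0 [^] (3::nat) \<otimes> a0 [^] (1::nat) = a0 [^] (4::nat)" using nat_pow_mult[OF a0G, of 3 1] by simp
  have "d = 1 \<or> d = 2 \<or> d = 3" using d by auto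
  then show ?thesis
  proof (elim disjE)
    assume "d = 1" then show ?thesis using p1 a0_ne1 by simp
  next
    assume d2: "d = 2"
    have "a0 \<otimes> a0 \<noteq> \<one>" using a0O a0A unfolding Om_def by blast
    then show ?thesis using d2 p2 by simp
  next
    assume d3: "d = 3"
    show ?thesis
    proof
      assume e: "a0 [^] d = \<one>"
      then have "\<one> \<otimes> a0 [^] (1::nat) = a0 [^] (4::nat)" using p4 d3 by simp
      then have "a0 = \<one>" using a0_4 p1 a0G by simp
      then show False using a0_ne1 by simp
    qed
  qed
qed

lemma pow_inj: assumes "i < 4" "j < 4" "a0 [^] (i::nat) = a0 [^] j" shows "i = j"
proof (rule ccontr)
  assume "i \<noteq> j"
  then consider "i < j" | "j < i" by linarith
  then show False
  proof cases
    case 1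
    have "a0 [^] j = a0 [^] i \<otimes> a0 [^] (j - i)" using nat_pow_mult[OF a0G, of i "j - i"] 1 by simp
    then have "a0 [^] (j - i) = \<one>" using assms(3) a0G
      by (metis l_cancel_one' nat_pow_closed)
    then show False using pow_ne[of "j - i"] 1 assms by simp
  next
    case 2
    have "a0 [^] i = a0 [^] j \<otimes> a0 [^] (i - j)" using nat_pow_mult[OF a0G, of j "i - j"] 2 by simp
    then have "a0 [^] (i - j) = \<one>" using assms(3) a0G
      by (metis l_cancel_one' nat_pow_closed)
    then show False using pow_ne[of "i - j"] 2 assms by simp
  qed
qed

definition "goodm m = (\<exists>\<psi>. \<psi> \<in> hom (Z2m_Z4 m) G \<and> inj_on \<psi> (carrier (Z2m_Z4 m)) \<and>
   \<psi> ` carrier (Z2m_Z4 m) \<subseteq> A \<and> a0 \<in> \<psi> ` carrier (Z2m_Z4 m))"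

lemma good0: "goodm 0"
proof -
  define \<psi> where "\<psi> = (\<lambda>p::((nat \<Rightarrow> int) \<times> int). a0 [^] nat (snd p))"
  have car: "carrier (Z2m_Z4 0) = {\<lambda>_. undefined} \<times> {0..<4}" by (simp add: Z_carrier)
  have hom: "\<psi> \<in> hom (Z2m_Z4 0) G"
  proof (rule homI)
    show "\<psi> p \<in> carrier G" for p using a0G by (simp add: \<psi>_def)
    show "\<psi> (p \<otimes>\<^bsub>Z2m_Z4 0\<^esub> p') = \<psi> p \<otimes> \<psi> p'" if p: "p \<in> carrier (Z2m_Z4 0)" and p': "p' \<in> carrier (Z2m_Z4 0)" for p p'
    proof -
      obtain f k where fk: "p = (f, k)" by (cases p)
      obtain f' k' where fk': "p' = (f', k')" by (cases p')
      have k: "0 \<le> k" "k < 4" and k': "0 \<le> k'" "k' < 4" using p p' fk fk' car by auto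
      have "nat ((k + k') mod 4) = (nat k + nat k') mod 4" using k k' by (simp add: nat_mod_distrib nat_add_distrib)
      then have "\<psi> (p \<otimes>\<^bsub>Z2m_Z4 0\<^esub> p') = a0 [^] ((nat k + nat k') mod 4)"
        using fk fk' by (simp add: \<psi>_def Z_mult)
      also have "\<dots> = a0 [^] (nat k + nat k')" using pow_mod4 by simp
      also have "\<dots> = \<psi> p \<otimes> \<psi> p'" using fk fk' nat_pow_mult[OF a0G] by (simp add: \<psi>_def)
      finally show ?thesis .
    qed
  qed
  have inj: "inj_on \<psi> (carrier (Z2m_Z4 0))"
  proof (rule inj_onI)
    fix p p' assume p: "p \<in> carrier (Z2m_Z4 0)" and p': "p' \<in> carrier (Z2m_Z4 0)" and e: "\<psi> p = \<psi> p'"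
    obtain f k where fk: "p = (f, k)" by (cases p)
    obtain f' k' where fk': "p' = (f', k')" by (cases p')
    have k: "0 \<le> k" "k < 4" and k': "0 \<le> k'" "k' < 4" and ff: "f = f'" using p p' fk fk' car by auto
    have "nat k = nat k'" using pow_inj[of "nat k" "nat k'"] e k k' fk fk' by (simp add: \<psi>_def)
    then show "p = p'" using fk fk' ff k k' by simp
  qed
  have img: "\<psi> ` carrier (Z2m_Z4 0) \<subseteq> A" using A_pow[OF a0A] by (auto simp: \<psi>_def)
  have "\<psi> (\<lambda>_. undefined, 1) = a0" using a0G by (simp add: \<psi>_def)
  moreover have "(\<lambda>_. undefined, 1) \<in> carrier (Z2m_Z4 0)" using car by simp
  ultimately have "a0 \<in> \<psi> ` carrier (Z2m_Z4 0)" by (metis image_eqI)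
  then show ?thesis unfolding goodm_def using hom inj img by blast
qed


lemma step:
  assumes hom: "\<psi> \<in> hom (Z2m_Z4 m) G" and inj: "inj_on \<psi> (carrier (Z2m_Z4 m))"
    and img: "\<psi> ` carrier (Z2m_Z4 m) \<subseteq> A" and a0i: "a0 \<in> \<psi> ` carrier (Z2m_Z4 m)"
    and ne: "\<psi> ` carrier (Z2m_Z4 m) \<noteq> A"
  shows "goodm (Suc m)"
proof -
  let ?Z = "Z2m_Z4 m"
  let ?Z' = "Z2m_Z4 (Suc m)"
  let ?B = "\<psi> ` carrier ?Z"
  have ghom: "group_hom ?Z G \<psi>"
    unfolding group_hom_def group_hom_axioms_def using Z_group is_group hom by blast
  have Bsub: "subgroup ?B G" by (rule group_hom.img_is_subgroup[OF ghom])
  obtain e' where e': "e' \<in> A" "e' \<notin> ?B" using ne img by blast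
  obtain e where e: "e \<in> Om" "e \<notin> ?B"
  proof (cases "e' \<in> Om")
    case True then show ?thesis using that e' by blast
  next
    case False
    have "e' \<in> Om \<union> (\<lambda>u. a0 \<otimes> u) ` Om" using A_split[symmetric] e'(1) by simp
    then obtain u where u: "u \<in> Om" "e' = a0 \<otimes> u" using False by blast
    have "u \<notin> ?B"
    proof
      assume "u \<in> ?B"
      then have "a0 \<otimes> u \<in> ?B" using subgroup.m_closed[OF Bsub a0i] by blast
      then show False using u e' by simp
    qed
    then show ?thesis using that u by blast
  qed
  have eA: "e \<in> A" using e Om_AI by simp
  have ee: "e \<otimes> e = \<one>" using Om_sq e by simp
  define Ef where "Ef = (\<lambda>j::int. if j = 1 then e else \<one>)"
  have EA: "Ef j \<in> A" for j using eA by (simp add: Ef_def)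
  have Emul: "Ef ((j + j') mod 2) = Ef j \<otimes> Ef j'" if "j \<in> {0,1}" "j' \<in> {0,1}" for j j'
    using that eA ee by (auto simp: Ef_def)
  define \<psi>' where "\<psi>' = (\<lambda>p::((nat \<Rightarrow> int) \<times> int). \<psi> (restrict (fst p) {..<m}, snd p) \<otimes> Ef (fst p m))"
  have carZ': "(restrict f {..<m}, k) \<in> carrier ?Z \<and> f m \<in> {0,1}"
    if "(f, k) \<in> carrier ?Z'" for f k
  proof -
    have f: "f \<in> (\<Pi>\<^sub>E i\<in>{..<Suc m}. {0..<2})" and k: "k \<in> {0..<4}" using that by (auto simp: Z_carrier)
    have "restrict f {..<m} \<in> (\<Pi>\<^sub>E i\<in>{..<m}. {0..<2})" using f by (auto simp: PiE_iff)
    moreover have "f m \<in> {0..<2}" using f by (auto simp: PiE_iff)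
    then have "f m \<in> {0,1}" by auto
    ultimately show ?thesis using k by (simp add: Z_carrier)
  qed
  have psiA: "\<psi> q \<in> A" if "q \<in> carrier ?Z" for q using img that by blast
  have hom': "\<psi>' \<in> hom ?Z' G"
  proof (rule homI)
    show "\<psi>' p \<in> carrier G" if "p \<in> carrier ?Z'" for p
    proof -
      obtain f k where fk: "p = (f, k)" by (cases p)
      have c1: "(restrict f {..<m}, k) \<in> carrier ?Z" using carZ' that fk by auto
      have "\<psi>' p = \<psi> (restrict f {..<m}, k) \<otimes> Ef (f m)" using fk by (simp add: \<psi>'_def)
      moreover have "\<psi> (restrict f {..<m}, k) \<otimes> Ef (f m) \<in> A" using psiA[OF c1] EA[of "f m"] by simp
      ultimately show ?thesis by simp
    qed
    show "\<psi>' (p \<otimes>\<^bsub>?Z'\<^esub> p') = \<psi>' p \<otimes> \<psi>' p'" if p: "p \<in> carrier ?Z'" and p': "p' \<in> carrier ?Z'" for p p'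
    proof -
      obtain f k where fk: "p = (f, k)" by (cases p)
      obtain f' k' where fk': "p' = (f', k')" by (cases p')
      have c1: "(restrict f {..<m}, k) \<in> carrier ?Z" "f m \<in> {0,1}" using carZ' p fk by auto
      have c2: "(restrict f' {..<m}, k') \<in> carrier ?Z" "f' m \<in> {0,1}" using carZ' p' fk' by auto
      have r: "restrict (\<lambda>i\<in>{..<Suc m}. (f i + f' i) mod 2) {..<m} =
               (\<lambda>i\<in>{..<m}. (restrict f {..<m} i + restrict f' {..<m} i) mod 2)"
      proof
        fix i show "restrict (\<lambda>i\<in>{..<Suc m}. (f i + f' i) mod 2) {..<m} i =
               (\<lambda>i\<in>{..<m}. (restrict f {..<m} i + restrict f' {..<m} i) mod 2) i"
          by (cases "i < m") simp_all
      qed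
      have "\<psi>' (p \<otimes>\<^bsub>?Z'\<^esub> p') = \<psi> ((restrict f {..<m}, k) \<otimes>\<^bsub>?Z\<^esub> (restrict f' {..<m}, k')) \<otimes> Ef ((f m + f' m) mod 2)"
        using fk fk' r by (simp add: \<psi>'_def Z_mult)
      also have "\<dots> = (\<psi> (restrict f {..<m}, k) \<otimes> \<psi> (restrict f' {..<m}, k')) \<otimes> (Ef (f m) \<otimes> Ef (f' m))"
        using hom_mult[OF hom c1(1) c2(1)] Emul[OF c1(2) c2(2)] by simp
      also have "\<dots> = (\<psi> (restrict f {..<m}, k) \<otimes> Ef (f m)) \<otimes> (\<psi> (restrict f' {..<m}, k') \<otimes> Ef (f' m))"
        using psiA[OF c1(1)] psiA[OF c2(1)] EA by (simp add: A_ac)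
      also have "\<dots> = \<psi>' p \<otimes> \<psi>' p'" using fk fk' by (simp add: \<psi>'_def)
      finally show ?thesis .
    qed
  qed
  have inj': "inj_on \<psi>' (carrier ?Z')"
  proof (rule inj_onI)
    fix p p' assume p: "p \<in> carrier ?Z'" and p': "p' \<in> carrier ?Z'" and eq: "\<psi>' p = \<psi>' p'"
    obtain f k where fk: "p = (f, k)" by (cases p)
    obtain f' k' where fk': "p' = (f', k')" by (cases p')
    have c1: "(restrict f {..<m}, k) \<in> carrier ?Z" "f m \<in> {0,1}" using carZ' p fk by auto
    have c2: "(restrict f' {..<m}, k') \<in> carrier ?Z" "f' m \<in> {0,1}" using carZ' p' fk' by auto
    define Xv where "Xv = \<psi> (restrict f {..<m}, k)"
    define Yv where "Yv = \<psi> (restrict f' {..<m}, k')"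
    have XB: "Xv \<in> ?B" and YB: "Yv \<in> ?B" using c1 c2 by (auto simp: Xv_def Yv_def)
    have XA: "Xv \<in> A" and YA: "Yv \<in> A" using psiA c1 c2 by (auto simp: Xv_def Yv_def)
    have eq2: "Xv \<otimes> Ef (f m) = Yv \<otimes> Ef (f' m)" using eq fk fk' by (simp add: \<psi>'_def Xv_def Yv_def)
    have fmm: "f m = f' m"
    proof (rule ccontr)
      assume ne: "f m \<noteq> f' m"
      then have "(f m = 1 \<and> f' m = 0) \<or> (f m = 0 \<and> f' m = 1)" using c1(2) c2(2) by auto
      then show False
      proof
        assume "f m = 1 \<and> f' m = 0"
        then have "Xv \<otimes> e = Yv" using eq2 YA by (simp add: Ef_def)
        then have "inv Xv \<otimes> (Xv \<otimes> e) = inv Xv \<otimes> Yv" by simp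
        then have "e = inv Xv \<otimes> Yv" using XA eA by (simp add: m_assoc[symmetric])
        moreover have "inv Xv \<otimes> Yv \<in> ?B" using Bsub XB YB by (simp add: subgroup.m_closed subgroup.m_inv_closed)
        ultimately show False using e by simp
      next
        assume "f m = 0 \<and> f' m = 1"
        then have "Xv = Yv \<otimes> e" using eq2 XA by (simp add: Ef_def)
        then have "inv Yv \<otimes> Xv = inv Yv \<otimes> (Yv \<otimes> e)" by simp
        then have "e = inv Yv \<otimes> Xv" using YA eA by (simp add: m_assoc[symmetric])
        moreover have "inv Yv \<otimes> Xv \<in> ?B" using Bsub XB YB by (simp add: subgroup.m_closed subgroup.m_inv_closed)
        ultimately show False using e by simp
      qed
    qed
    then have "Xv = Yv" using eq2 XA YA EA by simp
    then have "\<psi> (restrict f {..<m}, k) = \<psi> (restrict f' {..<m}, k')" by (simp only: Xv_def Yv_def)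
    then have "(restrict f {..<m}, k) = (restrict f' {..<m}, k')"
      by (rule inj_onD[OF inj _ c1(1) c2(1)])
    then have rr: "restrict f {..<m} = restrict f' {..<m}" and kk: "k = k'" by auto
    have f: "f \<in> (\<Pi>\<^sub>E i\<in>{..<Suc m}. {0..<2})" and f': "f' \<in> (\<Pi>\<^sub>E i\<in>{..<Suc m}. {0..<2})"
      using p p' fk fk' by (auto simp: Z_carrier)
    have "f i = f' i" for i
    proof -
      consider "i < m" | "i = m" | "i > m" by linarith
      then show ?thesis
      proof cases
        case 1 then show ?thesis using fun_cong[OF rr, of i] by simp
      next
        case 2 then show ?thesis using fmm by simp
      next
        case 3
        then have im: "i \<notin> {..<Suc m}" by simp
        show ?thesis using PiE_arb[OF f im] PiE_arb[OF f' im] by simp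
      qed
    qed
    then have "f = f'" by (rule ext)
    then show "p = p'" using fk fk' kk by simp
  qed
  have img': "\<psi>' ` carrier ?Z' \<subseteq> A"
  proof
    fix y assume "y \<in> \<psi>' ` carrier ?Z'"
    then obtain p where p: "p \<in> carrier ?Z'" "y = \<psi>' p" by blast
    obtain f k where fk: "p = (f, k)" by (cases p)
    have c1: "(restrict f {..<m}, k) \<in> carrier ?Z" using carZ' p fk by auto
    have "y = \<psi> (restrict f {..<m}, k) \<otimes> Ef (f m)" using p fk by (simp add: \<psi>'_def)
    then show "y \<in> A" using psiA[OF c1] EA[of "f m"] by simp
  qed
  have a0': "a0 \<in> \<psi>' ` carrier ?Z'"
  proof -
    obtain q0 where q0c: "q0 \<in> carrier ?Z" and q0e: "\<psi> q0 = a0" using a0i by (metis imageE)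
    obtain r0 k0 where rk: "q0 = (r0, k0)" by (cases q0)
    have rkc: "(r0, k0) \<in> carrier ?Z" using q0c rk by simp
    have r0: "r0 \<in> (\<Pi>\<^sub>E i\<in>{..<m}. {0..<2})" and k0: "k0 \<in> {0..<4}"
      using rkc unfolding Z_carrier by auto
    define f where "f = r0(m := 0)"
    have fP: "f \<in> (\<Pi>\<^sub>E i\<in>{..<Suc m}. {0..<2})"
    proof (rule PiE_I)
      fix i assume i: "i \<in> {..<Suc m}"
      show "f i \<in> {0..<2}"
      proof (cases "i = m")
        case True then show ?thesis by (simp add: f_def)
      next
        case False
        then have im: "i \<in> {..<m}" using i by auto
        have "f i = r0 i" using False by (simp add: f_def)
        moreover have "r0 i \<in> {0..<2}" by (rule PiE_mem[OF r0 im])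
        ultimately show ?thesis by simp
      qed
    next
      fix i assume i: "i \<notin> {..<Suc m}"
      then have ne: "i \<noteq> m" and im: "i \<notin> {..<m}" by auto
      have "f i = r0 i" using ne by (simp add: f_def)
      also have "r0 i = undefined" by (rule PiE_arb[OF r0 im])
      finally show "f i = undefined" .
    qed
    have rf: "restrict f {..<m} = r0"
    proof (rule ext)
      fix i show "restrict f {..<m} i = r0 i"
      proof (cases "i < m")
        case True then show ?thesis by (simp add: f_def)
      next
        case False
        then have im: "i \<notin> {..<m}" by simp
        then show ?thesis using PiE_arb[OF r0 im] by simp
      qed
    qed
    have fm: "f m = 0" by (simp add: f_def)
    have "\<psi>' (f, k0) = \<psi> (restrict f {..<m}, k0) \<otimes> Ef (f m)" by (simp add: \<psi>'_def)
    also have "\<dots> = \<psi> (r0, k0) \<otimes> \<one>" by (simp only: rf fm Ef_def) simp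
    also have "\<dots> = \<psi> (r0, k0)" using psiA[OF rkc] by simp
    also have "\<dots> = a0" using q0e rk by simp
    finally have e: "\<psi>' (f, k0) = a0" .
    have "(f, k0) \<in> carrier ?Z'" using fP k0 unfolding Z_carrier by simp
    then show ?thesis using e by (metis image_eqI)
  qed
  show ?thesis unfolding goodm_def using hom' inj' img' a0' by blast
qed

lemma iso_exists: "\<exists>m. G\<lparr>carrier := A\<rparr> \<cong> Z2m_Z4 m"
proof -
  have bound: "2 ^ m * 4 \<le> card A" if gmm: "goodm m" for m
  proof -
    obtain \<psi> where h: "inj_on \<psi> (carrier (Z2m_Z4 m))" "\<psi> ` carrier (Z2m_Z4 m) \<subseteq> A"
      using gmm unfolding goodm_def by blast
    have "card (carrier (Z2m_Z4 m)) = card (\<psi> ` carrier (Z2m_Z4 m))" using card_image[OF h(1)] by simp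
    also have "\<dots> \<le> card A" by (rule card_mono[OF finA h(2)])
    finally show ?thesis using Z_card2 by simp
  qed
  have "\<exists>m. goodm m \<and> \<not> goodm (Suc m)"
  proof (rule ccontr)
    assume "\<not> ?thesis"
    then have all: "goodm m" for m by (induct m) (use good0 in auto)
    have "2 ^ (card A) * 4 \<le> card A" using bound[OF all] .
    moreover have "card A < 2 ^ (card A)" by (rule less_exp)
    ultimately show False by simp
  qed
  then obtain m where gm: "goodm m" and ngm: "\<not> goodm (Suc m)" by blast
  from gm obtain \<psi> where hom: "\<psi> \<in> hom (Z2m_Z4 m) G" and inj: "inj_on \<psi> (carrier (Z2m_Z4 m))"
    and img: "\<psi> ` carrier (Z2m_Z4 m) \<subseteq> A" and a0i: "a0 \<in> \<psi> ` carrier (Z2m_Z4 m)"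
    unfolding goodm_def by blast
  have imgA: "\<psi> ` carrier (Z2m_Z4 m) = A" using step[OF hom inj img a0i] ngm by blast
  have "\<psi> \<in> iso (Z2m_Z4 m) (G\<lparr>carrier := A\<rparr>)"
  proof (rule isoI)
    show "\<psi> \<in> hom (Z2m_Z4 m) (G\<lparr>carrier := A\<rparr>)"
      using hom imgA by (auto simp: hom_def)
    show "bij_betw \<psi> (carrier (Z2m_Z4 m)) (carrier (G\<lparr>carrier := A\<rparr>))"
      using inj imgA by (simp add: bij_betw_def)
  qed
  then have "Z2m_Z4 m \<cong> G\<lparr>carrier := A\<rparr>" by (rule is_isoI)
  then show ?thesis using group.iso_sym[OF Z_group] by blast
qed

end



theorem theorem3p1:
  fixes G :: "('a, 'b) monoid_scheme" and A :: "'a set" and n :: nat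
  assumes "gen_dicyclic G A"
    and "card A = 2 * n"
  shows "(\<not> (\<exists>m. G\<lparr>carrier := A\<rparr> \<cong> Z2m_Z4 m) \<longrightarrow>
           (exponent_two G A \<longrightarrow> CD_lattice G = {carrier G}) \<and>
           (\<not> exponent_two G A \<longrightarrow> CD_lattice G = {A}))
       \<and> ((\<exists>m. G\<lparr>carrier := A\<rparr> \<cong> Z2m_Z4 m) \<longrightarrow>
           quasi_antichain (CD_lattice G) 3 \<and>
           CD_lattice G = {H. subgroup H G \<and> group_center G \<subseteq> H})"
proof -
  obtain x where D: "dic G A x"
    using assms(1) unfolding gen_dicyclic_def dic_def dic_axioms_def by blast
  interpret dic G A x by (rule D)
  have exp2: "exponent_two G A \<longleftrightarrow> Om = A"
  proof -
    have "A \<noteq> {\<one>\<^bsub>G\<^esub>}" using sA s_ne by blast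
    moreover have "(\<forall>a\<in>A. a [^]\<^bsub>G\<^esub> (2::nat) = \<one>\<^bsub>G\<^esub>) \<longleftrightarrow> Om = A"
      by (auto simp: Om_def numeral_2_eq_2)
    ultimately show ?thesis by (simp add: exponent_two_def)
  qed
  have qpos: "0 < card Om" using finOm one_Om card_gt_0_iff by blast
  have isoI: "2 * card Om = card A \<and> Om \<noteq> A" if "\<exists>m. G\<lparr>carrier := A\<rparr> \<cong> Z2m_Z4 m"
  proof -
    from that obtain m where "G\<lparr>carrier := A\<rparr> \<cong> Z2m_Z4 m" by blast
    then have h: "2 * card Om = card A" by (rule iso_half)
    then have "Om \<noteq> A" using qpos by auto
    then show ?thesis using h by simp
  qed
  have nonab: "\<exists>a0. a0 \<in> A \<and> a0 \<notin> Om" if "Om \<noteq> A" using that Om_A by blast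
  show ?thesis
  proof (rule conjI; rule impI)
    assume niso: "\<not> (\<exists>m. G\<lparr>carrier := A\<rparr> \<cong> Z2m_Z4 m)"
    {
      assume "exponent_two G A"
      then have ab: "Om = A" using exp2 by simp
      have mx: "cd_max G = card (carrier G) * card (carrier G)"
      proof (rule cd_max_eqI[OF finG])
        show "cd_measure G H \<le> card (carrier G) * card (carrier G)" if "subgroup H G" for H
          using bound_ab[OF ab that] by simp
        show "subgroup (carrier G) G" by (rule subgroup_self)
        show "cd_measure G (carrier G) = card (carrier G) * card (carrier G)"
          using cent_all[OF ab subset_refl] by (simp add: cd_measure_def)
      qed
      have "CD_lattice G = {carrier G}"
      proof
        show "CD_lattice G \<subseteq> {carrier G}"
          using bound_ab[OF ab] mx by (auto simp: CD_lattice_def)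
        show "{carrier G} \<subseteq> CD_lattice G"
          using mx cent_all[OF ab subset_refl] subgroup_self by (simp add: CD_lattice_def cd_measure_def)
      qed
    }
    moreover
    {
      assume "\<not> exponent_two G A"
      then have "Om \<noteq> A" using exp2 by simp
      then obtain a0 where a0: "a0 \<in> A" "a0 \<notin> Om" using nonab by blast
      have q2: "2 * card Om \<noteq> card A"
      proof
        assume h: "2 * card Om = card A"
        have "dic2 G A x a0" unfolding dic2_def dic2_axioms_def using D a0 h by blast
        then have "\<exists>m. G\<lparr>carrier := A\<rparr> \<cong> Z2m_Z4 m" by (rule dic2.iso_exists)
        then show False using niso by blast
      qed
      have mA: "cd_measure G A = card A * card A"
        using cent_A[OF subset_refl a0] by (simp add: cd_measure_def)
      have mx: "cd_max G = card A * card A"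
      proof (rule cd_max_eqI[OF finG])
        show "cd_measure G H \<le> card A * card A" if "subgroup H G" for H
          using bound_nonab[OF a0 that] by simp
        show "subgroup A G" by (rule subA)
        show "cd_measure G A = card A * card A" by (rule mA)
      qed
      have "CD_lattice G = {A}"
      proof
        show "CD_lattice G \<subseteq> {A}"
          using bound_nonab[OF a0] mx q2 by (auto simp: CD_lattice_def)
        show "{A} \<subseteq> CD_lattice G"
          using mx mA subA by (simp add: CD_lattice_def)
      qed
    }
    ultimately show "(exponent_two G A \<longrightarrow> CD_lattice G = {carrier G}) \<and>
           (\<not> exponent_two G A \<longrightarrow> CD_lattice G = {A})" by blast
  next
    assume iso: "\<exists>m. G\<lparr>carrier := A\<rparr> \<cong> Z2m_Z4 m"
    have h: "2 * card Om = card A" and ne: "Om \<noteq> A" using isoI[OF iso] by auto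
    obtain a0 where a0: "a0 \<in> A" "a0 \<notin> Om" using nonab[OF ne] by blast
    have D2: "dic2 G A x a0" unfolding dic2_def dic2_axioms_def using D a0 h by blast
    show "quasi_antichain (CD_lattice G) 3 \<and> CD_lattice G = {H. subgroup H G \<and> group_center G \<subseteq> H}"
      using dic2.QA[OF D2] dic2.CD_eq[OF D2] dic2.center_eq[OF D2] by simp
  qed
qed


end
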